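(* Let $G_r=(V_r,E_r)$ be an arbitrary directed graph and $(i,j)\in E_r$ an existing edge. Adding to $G_r$ any number of new edges parallel to it, each oriented either as $(i,j)$ or as $(j,i)$, increases the extraction width $\mathrm{ew}(G_r)$ by at most the maximum degree of $G_r$. The same holds if instead of edges, paths between $i$ and $j$ (through new nodes) are added.
   Context: An extraction order of a directed (multi)graph $G=(V,E)$ is a rooted directed acyclic graph $G^{\mathcal X}=(V,E^{\mathcal X},s)$ in which every node is reachable from $s$ and $E^{\mathcal X}$ is obtained from $E$ by reversing some (possibly no) edges. A confluence from $a$ to $b$ is a pair of directed paths in $E^{\mathcal X}$ from $a$ to $b$ sharing no node other than $a,b$. For $e\in E^{\mathcal X}$, its label set $\mathcal L_e$ is the set of nodes $b$ such that $e$ lies on a confluence with target $b$. Each node's outgoing edges are partitioned into bags: classes of the equivalence relation generated by $e\sim e'$ iff $\mathcal L_e\cap\mathcal L_{e'}\ne\emptyset$; bag label set $\mathcal L_B=\bigcup_{e\in B}\mathcal L_e$. The width of $G^{\mathcal X}$ is $\mathrm{ew}_{\mathcal X}(G^{\mathcal X})=1+\max|\mathcal L_B|$ over all bags, and $\mathrm{ew}(G)$ is the minimum width over all extraction orders of $G$. *)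

theory Defs
  imports Main
begin

text \<open>A directed multigraph: vertex set, set of edge identifiers, and for each
edge its tail and head.  Parallel edges are distinct edge identifiers.\<close>

record ('v, 'e) dgraph =
  verts :: "'v set"
  arcs  :: "'e set"
  tail  :: "'e \<Rightarrow> 'v"
  head  :: "'e \<Rightarrow> 'v"

definition wf_dgraph :: "('v, 'e) dgraph \<Rightarrow> bool" where
  "wf_dgraph G \<longleftrightarrow> finite (verts G) \<and> finite (arcs G) \<and>
     (\<forall>e \<in> arcs G. tail G e \<in> verts G \<and> head G e \<in> verts G)"

text \<open>A reorientation is given by a predicate \<open>f\<close>: edge \<open>e\<close> is reversed iff \<open>f e\<close>.\<close>

definition xtail :: "('v, 'e) dgraph \<Rightarrow> ('e \<Rightarrow> bool) \<Rightarrow> 'e \<Rightarrow> 'v" where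
  "xtail G f e = (if f e then head G e else tail G e)"

definition xhead :: "('v, 'e) dgraph \<Rightarrow> ('e \<Rightarrow> bool) \<Rightarrow> 'e \<Rightarrow> 'v" where
  "xhead G f e = (if f e then tail G e else head G e)"

fun xwalk :: "('v, 'e) dgraph \<Rightarrow> ('e \<Rightarrow> bool) \<Rightarrow> 'v \<Rightarrow> 'e list \<Rightarrow> 'v \<Rightarrow> bool" where
  "xwalk G f a [] b \<longleftrightarrow> a = b"
| "xwalk G f a (e # es) b \<longleftrightarrow>
     e \<in> arcs G \<and> xtail G f e = a \<and> xwalk G f (xhead G f e) es b"

definition walk_verts :: "('v, 'e) dgraph \<Rightarrow> ('e \<Rightarrow> bool) \<Rightarrow> 'v \<Rightarrow> 'e list \<Rightarrow> 'v list" where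
  "walk_verts G f a es = a # map (xhead G f) es"

definition xpath :: "('v, 'e) dgraph \<Rightarrow> ('e \<Rightarrow> bool) \<Rightarrow> 'v \<Rightarrow> 'e list \<Rightarrow> 'v \<Rightarrow> bool" where
  "xpath G f a es b \<longleftrightarrow> xwalk G f a es b \<and> distinct (walk_verts G f a es)"

definition is_extraction_order :: "('v, 'e) dgraph \<Rightarrow> ('e \<Rightarrow> bool) \<Rightarrow> 'v \<Rightarrow> bool" where
  "is_extraction_order G f s \<longleftrightarrow>
     s \<in> verts G \<and>
     (\<nexists>v es. es \<noteq> [] \<and> xwalk G f v es v) \<and>
     (\<forall>v \<in> verts G. \<exists>es. xwalk G f s es v)"

definition confluence ::
  "('v, 'e) dgraph \<Rightarrow> ('e \<Rightarrow> bool) \<Rightarrow> 'v \<Rightarrow> 'v \<Rightarrow> 'e list \<Rightarrow> 'e list \<Rightarrow> bool" where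
  "confluence G f a b p q \<longleftrightarrow>
     xpath G f a p b \<and> xpath G f a q b \<and> p \<noteq> q \<and>
     set (walk_verts G f a p) \<inter> set (walk_verts G f a q) \<subseteq> {a, b}"

definition label_set :: "('v, 'e) dgraph \<Rightarrow> ('e \<Rightarrow> bool) \<Rightarrow> 'e \<Rightarrow> 'v set" where
  "label_set G f e =
     {b. \<exists>a p q. confluence G f a b p q \<and> e \<in> set p \<union> set q}"

definition out_arcs :: "('v, 'e) dgraph \<Rightarrow> ('e \<Rightarrow> bool) \<Rightarrow> 'v \<Rightarrow> 'e set" where
  "out_arcs G f v = {e \<in> arcs G. xtail G f e = v}"

text \<open>Generating relation of the bag equivalence at node \<open>v\<close>; its reflexive
transitive closure (it is symmetric) is the generated equivalence on \<open>out_arcs\<close>.\<close>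

definition bag_rel :: "('v, 'e) dgraph \<Rightarrow> ('e \<Rightarrow> bool) \<Rightarrow> 'v \<Rightarrow> 'e \<Rightarrow> 'e \<Rightarrow> bool" where
  "bag_rel G f v e e' \<longleftrightarrow> e \<in> out_arcs G f v \<and> e' \<in> out_arcs G f v \<and>
     label_set G f e \<inter> label_set G f e' \<noteq> {}"

definition bags :: "('v, 'e) dgraph \<Rightarrow> ('e \<Rightarrow> bool) \<Rightarrow> 'e set set" where
  "bags G f = {{e' \<in> out_arcs G f v. (bag_rel G f v)\<^sup>*\<^sup>* e e'} | v e.
                 v \<in> verts G \<and> e \<in> out_arcs G f v}"

definition bag_label_set :: "('v, 'e) dgraph \<Rightarrow> ('e \<Rightarrow> bool) \<Rightarrow> 'e set \<Rightarrow> 'v set" where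
  "bag_label_set G f B = (\<Union>e \<in> B. label_set G f e)"

definition xwidth :: "('v, 'e) dgraph \<Rightarrow> ('e \<Rightarrow> bool) \<Rightarrow> nat" where
  "xwidth G f = 1 + Max (insert 0 ((\<lambda>B. card (bag_label_set G f B)) ` bags G f))"

definition ew :: "('v, 'e) dgraph \<Rightarrow> nat" where
  "ew G = (INF fs \<in> {(f, s). is_extraction_order G f s}. xwidth G (fst fs))"

definition degree :: "('v, 'e) dgraph \<Rightarrow> 'v \<Rightarrow> nat" where
  "degree G v = card {e \<in> arcs G. tail G e = v} + card {e \<in> arcs G. head G e = v}"

definition max_degree :: "('v, 'e) dgraph \<Rightarrow> nat" where
  "max_degree G = Max (insert 0 (degree G ` verts G))"

definition extends :: "('v, 'e) dgraph \<Rightarrow> ('v, 'e) dgraph \<Rightarrow> bool" where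
  "extends G' G \<longleftrightarrow> verts G \<subseteq> verts G' \<and> arcs G \<subseteq> arcs G' \<and>
     (\<forall>e \<in> arcs G. tail G' e = tail G e \<and> head G' e = head G e)"

definition add_parallel_edges ::
  "('v, 'e) dgraph \<Rightarrow> 'v \<Rightarrow> 'v \<Rightarrow> ('v, 'e) dgraph \<Rightarrow> bool" where
  "add_parallel_edges G i j G' \<longleftrightarrow>
     wf_dgraph G' \<and> extends G' G \<and> verts G' = verts G \<and>
     (\<forall>e \<in> arcs G' - arcs G.
        (tail G' e = i \<and> head G' e = j) \<or> (tail G' e = j \<and> head G' e = i))"

definition inner_verts :: "('v, 'e) dgraph \<Rightarrow> 'e list \<Rightarrow> 'v set" where
  "inner_verts G es = set (butlast (map (head G) es))"

definition add_parallel_paths ::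
  "('v, 'e) dgraph \<Rightarrow> 'v \<Rightarrow> 'v \<Rightarrow> ('v, 'e) dgraph \<Rightarrow> bool" where
  "add_parallel_paths G i j G' \<longleftrightarrow>
     wf_dgraph G' \<and> extends G' G \<and>
     (\<exists>ps :: 'e list list.
        (\<forall>p \<in> set ps. length p \<ge> 2 \<and>
            (xpath G' (\<lambda>_. False) i p j \<or> xpath G' (\<lambda>_. False) j p i) \<and>
            set p \<inter> arcs G = {} \<and> inner_verts G' p \<inter> verts G = {}) \<and>
        (\<forall>k < length ps. \<forall>l < length ps. k \<noteq> l \<longrightarrow>
            set (ps ! k) \<inter> set (ps ! l) = {} \<and>
            inner_verts G' (ps ! k) \<inter> inner_verts G' (ps ! l) = {}) \<and>
        arcs G' - arcs G = (\<Union>p \<in> set ps. set p) \<and>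
        verts G' - verts G = (\<Union>p \<in> set ps. inner_verts G' p))"

end

theory Submission
  imports Defs
begin

lemma xwalk_append: "xwalk G f a (xs @ ys) c \<longleftrightarrow> (\<exists>b. xwalk G f a xs b \<and> xwalk G f b ys c)"
  by (induction xs arbitrary: a) auto

lemma walk_verts_Cons: "walk_verts G f a (e # es) = a # walk_verts G f (xhead G f e) es"
  by (simp add: walk_verts_def)

lemma walk_verts_Nil[simp]: "walk_verts G f a [] = [a]"
  by (simp add: walk_verts_def)

lemma walk_verts_append: "walk_verts G f a (xs @ ys) = walk_verts G f a xs @ map (xhead G f) ys"
  by (simp add: walk_verts_def)

lemma length_walk_verts[simp]: "length (walk_verts G f a es) = Suc (length es)"
  by (simp add: walk_verts_def)

lemma walk_verts_nth0[simp]: "walk_verts G f a es ! 0 = a"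
  by (simp add: walk_verts_def)

lemma walk_verts_hd[simp]: "hd (walk_verts G f a es) = a"
  by (simp add: walk_verts_def)

lemma walk_verts_nth_Suc: "m < length es \<Longrightarrow> walk_verts G f a es ! Suc m = xhead G f (es ! m)"
  by (simp add: walk_verts_def)

lemma xwalk_last: "xwalk G f a es b \<Longrightarrow> last (walk_verts G f a es) = b"
  by (induction es arbitrary: a) (auto simp: walk_verts_Cons walk_verts_def)

lemma xwalk_nth_last: "xwalk G f a es b \<Longrightarrow> walk_verts G f a es ! length es = b"
proof -
  have "walk_verts G f a es \<noteq> []" by (simp add: walk_verts_def)
  then show "xwalk G f a es b \<Longrightarrow> walk_verts G f a es ! length es = b"
    using xwalk_last[of G f a es b] by (simp add: last_conv_nth)
qed

lemma xwalk_nth_tail: "xwalk G f a es b \<Longrightarrow> m < length es \<Longrightarrow> xtail G f (es!m) = walk_verts G f a es ! m"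
proof (induction es arbitrary: a m)
  case Nil then show ?case by simp
next
  case (Cons e es)
  then show ?case by (cases m) (auto simp: walk_verts_Cons)
qed

lemma xwalk_arcs: "xwalk G f a es b \<Longrightarrow> set es \<subseteq> arcs G"
  by (induction es arbitrary: a) auto

lemma xtail_in: "wf_dgraph G \<Longrightarrow> e \<in> arcs G \<Longrightarrow> xtail G f e \<in> verts G"
  by (auto simp: wf_dgraph_def xtail_def)

lemma xhead_in: "wf_dgraph G \<Longrightarrow> e \<in> arcs G \<Longrightarrow> xhead G f e \<in> verts G"
  by (auto simp: wf_dgraph_def xhead_def)

lemma xwalk_verts_in: "wf_dgraph G \<Longrightarrow> xwalk G f a es b \<Longrightarrow> a \<in> verts G \<Longrightarrow> set (walk_verts G f a es) \<subseteq> verts G"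
  by (induction es arbitrary: a) (auto simp: walk_verts_Cons xhead_in)

lemma xwalk_end_in: "wf_dgraph G \<Longrightarrow> xwalk G f a es b \<Longrightarrow> es \<noteq> [] \<Longrightarrow> a \<in> verts G \<and> b \<in> verts G"
proof (induction es arbitrary: a)
  case Nil then show ?case by simp
next
  case (Cons e es)
  then show ?case by (cases es) (auto simp: xtail_in xhead_in)
qed

lemma xwalk_cong: "(\<And>e. e \<in> set es \<Longrightarrow> f1 e = f2 e) \<Longrightarrow> xwalk G f1 a es b = xwalk G f2 a es b"
  by (induction es arbitrary: a) (auto simp: xtail_def xhead_def)

lemma walk_verts_cong: "(\<And>e. e \<in> set es \<Longrightarrow> f1 e = f2 e) \<Longrightarrow> walk_verts G f1 a es = walk_verts G f2 a es"
  by (auto simp: walk_verts_def xhead_def)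

lemma xwalk_rev:
  assumes "\<And>e. e \<in> set es \<Longrightarrow> g e = (\<not> f e)" "xwalk G f a es b"
  shows "xwalk G g b (rev es) a \<and> walk_verts G g b (rev es) = rev (walk_verts G f a es)"
  using assms
proof (induction es arbitrary: a)
  case Nil then show ?case by simp
next
  case (Cons e es)
  have w: "xwalk G f (xhead G f e) es b" "e \<in> arcs G" "xtail G f e = a" using Cons.prems(2) by simp_all
  have IH: "xwalk G g b (rev es) (xhead G f e) \<and> walk_verts G g b (rev es) = rev (walk_verts G f (xhead G f e) es)"
    using Cons.IH[OF _ w(1)] Cons.prems(1) by simp
  have ge: "g e = (\<not> f e)" using Cons.prems(1) by simp
  have hx: "xtail G g e = xhead G f e" "xhead G g e = xtail G f e" using ge by (auto simp: xtail_def xhead_def)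
  have "xwalk G g (xhead G f e) [e] a" using w hx by simp
  then have "xwalk G g b (rev es @ [e]) a" unfolding xwalk_append using IH by blast
  moreover have "walk_verts G g b (rev es @ [e]) = rev (walk_verts G f a (e # es))"
    using IH hx w by (simp add: walk_verts_append walk_verts_Cons)
  ultimately show ?case by simp
qed

lemma xpath_Nil_loop: "xpath G f a es a \<Longrightarrow> es = []"
proof (rule ccontr)
  assume a: "xpath G f a es a" "es \<noteq> []"
  then have "last (walk_verts G f a es) = a" using xwalk_last[of G f a es a] unfolding xpath_def by blast
  moreover have "walk_verts G f a es = a # map (xhead G f) es" by (simp add: walk_verts_def)
  ultimately have "last (map (xhead G f) es) = a" using a(2) by simp
  then have "a \<in> set (map (xhead G f) es)" using a(2) by (metis last_in_set Nil_is_map_conv)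
  then show False using a(1) by (simp add: xpath_def walk_verts_def)
qed

lemma confluence_basic:
  assumes "confluence G f a b p q" shows "a \<noteq> b" "p \<noteq> []" "q \<noteq> []"
proof -
  show ab: "a \<noteq> b"
  proof
    assume "a = b"
    then have "p = []" "q = []" using assms xpath_Nil_loop by (auto simp: confluence_def)
    then show False using assms by (simp add: confluence_def)
  qed
  show "p \<noteq> []" "q \<noteq> []" using assms ab by (auto simp: confluence_def xpath_def)
qed


lemma xwalk_end_unique: "xwalk G f a es b \<Longrightarrow> xwalk G f a es b' \<Longrightarrow> b = b'"
  using xwalk_last by metis

lemma xwalk_last_head: "xwalk G f a es b \<Longrightarrow> es \<noteq> [] \<Longrightarrow> xhead G f (last es) = b"
proof -
  assume w: "xwalk G f a es b" and ne: "es \<noteq> []"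
  have "walk_verts G f a es ! length es = b" using xwalk_nth_last w by metis
  moreover have "walk_verts G f a es ! Suc (length es - 1) = xhead G f (es ! (length es - 1))"
    using ne by (intro walk_verts_nth_Suc) simp
  ultimately show ?thesis using ne by (simp add: last_conv_nth)
qed

lemma xwalk_last_tail: "xwalk G f a es b \<Longrightarrow> es \<noteq> [] \<Longrightarrow>
   xtail G f (last es) = walk_verts G f a es ! (length es - 1)"
  using xwalk_nth_tail[of G f a es b "length es - 1"] by (simp add: last_conv_nth)

lemma xwalk_hd_tail: "xwalk G f a es b \<Longrightarrow> es \<noteq> [] \<Longrightarrow> xtail G f (hd es) = a"
  by (cases es) auto

lemma path_single_tail:
  assumes "xpath G f a p b" "p \<noteq> []" "xtail G f (last p) = a" shows "p = [last p]"
proof -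
  have d: "distinct (walk_verts G f a p)" using assms by (simp add: xpath_def)
  have "walk_verts G f a p ! (length p - 1) = walk_verts G f a p ! 0"
    using xwalk_last_tail[of G f a p b] assms by (simp add: xpath_def)
  then have "length p - 1 = 0" using nth_eq_iff_index_eq[OF d, of "length p - 1" 0] by simp
  then have "length p = 1" using assms(2) by (cases p) auto
  then show ?thesis by (cases p) auto
qed

lemma path_single_head:
  assumes "xpath G f a p b" "p \<noteq> []" "xhead G f (hd p) = b" shows "p = [hd p]"
proof -
  have d: "distinct (walk_verts G f a p)" using assms by (simp add: xpath_def)
  have "walk_verts G f a p ! 1 = xhead G f (p ! 0)" using assms(2) walk_verts_nth_Suc[of 0 p] by simp
  then have "walk_verts G f a p ! 1 = walk_verts G f a p ! length p"
    using assms xwalk_nth_last[of G f a p b] by (simp add: xpath_def hd_conv_nth)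
  then have "1 = length p" using nth_eq_iff_index_eq[OF d, of 1 "length p"] assms(2) by (cases p) auto
  then show ?thesis by (cases p) auto
qed

lemma xwalk_take: "xwalk G f a es b \<Longrightarrow> n \<le> length es \<Longrightarrow> xwalk G f a (take n es) (walk_verts G f a es ! n)"
proof (induction es arbitrary: a n)
  case Nil then show ?case by simp
next
  case (Cons e es)
  then show ?case by (cases n) (auto simp: walk_verts_Cons)
qed

lemma suffix_path:
  assumes "xpath G f a (p1 @ e1 # p2) b" shows "xpath G f (xtail G f e1) (e1 # p2) b"
proof -
  obtain c where c: "xwalk G f a p1 c" "xwalk G f c (e1 # p2) b"
    using assms xwalk_append unfolding xpath_def by metis
  have ce: "c = xtail G f e1" using c by simp
  have d: "distinct (walk_verts G f a p1 @ map (xhead G f) (e1 # p2))"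
    using assms by (simp add: xpath_def walk_verts_append del: list.map)
  have "c \<in> set (walk_verts G f a p1)" using xwalk_last[OF c(1)]
    by (metis last_in_set length_walk_verts list.size(3) nat.distinct(1))
  then have "c \<notin> set (map (xhead G f) (e1 # p2))" using d by auto
  moreover have "distinct (map (xhead G f) (e1 # p2))" using d by simp
  ultimately have "distinct (walk_verts G f c (e1 # p2))" by (simp add: walk_verts_def del: list.map)
  then show ?thesis using c ce by (simp add: xpath_def)
qed

lemma label_in_verts: "wf_dgraph G \<Longrightarrow> b \<in> label_set G f e \<Longrightarrow> b \<in> verts G"
proof -
  assume wf: "wf_dgraph G" and b: "b \<in> label_set G f e"
  then obtain a p q where c: "confluence G f a b p q" by (auto simp: label_set_def)
  then have "p \<noteq> []" "xwalk G f a p b" using confluence_basic(2)[OF c] by (auto simp: confluence_def xpath_def)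
  then show ?thesis using xwalk_end_in wf by metis
qed



locale setting =
  fixes G :: "('v, 'e) dgraph" and f :: "'e \<Rightarrow> bool" and s :: 'v
    and G' :: "('v, 'e) dgraph" and f' :: "'e \<Rightarrow> bool" and e0 :: 'e and QS :: "'e list set"
  assumes wfG: "wf_dgraph G" and wfG': "wf_dgraph G'" and ext: "extends G' G"
    and e0: "e0 \<in> arcs G" and eo: "is_extraction_order G f s"
    and agree: "\<And>e. e \<in> arcs G \<Longrightarrow> f' e = f e"
    and QS_path: "\<And>Q. Q \<in> QS \<Longrightarrow> xpath G' f' (xtail G f e0) Q (xhead G f e0)"
    and QS_ne: "\<And>Q. Q \<in> QS \<Longrightarrow> Q \<noteq> []"
    and QS_new: "\<And>Q. Q \<in> QS \<Longrightarrow> set Q \<inter> arcs G = {}"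
    and QS_inner: "\<And>Q. Q \<in> QS \<Longrightarrow>
        (set (walk_verts G' f' (xtail G f e0) Q) - {xtail G f e0, xhead G f e0}) \<inter> verts G = {}"
    and QS_disj: "\<And>Q1 Q2. Q1 \<in> QS \<Longrightarrow> Q2 \<in> QS \<Longrightarrow> Q1 \<noteq> Q2 \<Longrightarrow>
        set Q1 \<inter> set Q2 = {} \<and>
        (set (walk_verts G' f' (xtail G f e0) Q1) - {xtail G f e0, xhead G f e0}) \<inter>
        (set (walk_verts G' f' (xtail G f e0) Q2) - {xtail G f e0, xhead G f e0}) = {}"
    and QS_arcs: "arcs G' - arcs G \<subseteq> (\<Union>Q \<in> QS. set Q)"
    and QS_verts: "verts G' - verts G \<subseteq>
        (\<Union>Q \<in> QS. set (walk_verts G' f' (xtail G f e0) Q) - {xtail G f e0, xhead G f e0})"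
begin

abbreviation "I \<equiv> xtail G f e0"
abbreviation "J \<equiv> xhead G f e0"
abbreviation "wv Q \<equiv> walk_verts G' f' I Q"
abbreviation "inner Q \<equiv> set (wv Q) - {I, J}"

lemma old_x: "e \<in> arcs G \<Longrightarrow> xtail G' f' e = xtail G f e \<and> xhead G' f' e = xhead G f e"
  using ext agree by (auto simp: extends_def xtail_def xhead_def)

lemma IJ: "I \<in> verts G" "J \<in> verts G" "I \<noteq> J"
proof -
  show "I \<in> verts G" "J \<in> verts G" using wfG e0 by (auto simp: xtail_in xhead_in)
  show "I \<noteq> J"
  proof
    assume "I = J"
    then have "xwalk G f I [e0] I" using e0 by simp
    then show False using eo unfolding is_extraction_order_def by blast
  qed
qed

lemma lift: "xwalk G f a es b \<Longrightarrow> xwalk G' f' a es b \<and> walk_verts G' f' a es = walk_verts G f a es"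
proof (induction es arbitrary: a)
  case Nil then show ?case by simp
next
  case (Cons e es)
  then have "e \<in> arcs G" by simp
  then show ?case using Cons old_x ext by (auto simp: walk_verts_Cons extends_def)
qed

lemma Qdist: "Q \<in> QS \<Longrightarrow> distinct (wv Q)"
  using QS_path by (simp add: xpath_def)

lemma Qwalk: "Q \<in> QS \<Longrightarrow> xwalk G' f' I Q J"
  using QS_path by (simp add: xpath_def)

lemma Qlast: "Q \<in> QS \<Longrightarrow> wv Q ! length Q = J"
  using Qwalk xwalk_nth_last by metis

lemma Qtail: "Q \<in> QS \<Longrightarrow> m < length Q \<Longrightarrow> xtail G' f' (Q!m) = wv Q ! m"
  using Qwalk xwalk_nth_tail by metis

lemma Qhead: "m < length Q \<Longrightarrow> xhead G' f' (Q!m) = wv Q ! Suc m"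
  by (simp add: walk_verts_nth_Suc)

lemma Qinner_idx:
  assumes Q: "Q \<in> QS" and n: "0 < n" "n < length Q"
  shows "wv Q ! n \<in> inner Q" "wv Q ! n \<notin> verts G"
proof -
  have d: "distinct (wv Q)" using Q Qdist by simp
  have "wv Q ! n \<noteq> wv Q ! 0" using nth_eq_iff_index_eq[OF d, of n 0] n by simp
  moreover have "wv Q ! n \<noteq> wv Q ! length Q" using d n by (simp add: nth_eq_iff_index_eq)
  ultimately show "wv Q ! n \<in> inner Q" using Q Qlast n by auto
  then show "wv Q ! n \<notin> verts G" using QS_inner Q by blast
qed

lemma Qinner_ex:
  assumes Q: "Q \<in> QS" and v: "v \<in> inner Q"
  shows "\<exists>n. 0 < n \<and> n < length Q \<and> v = wv Q ! n"
proof -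
  obtain n where n: "n < Suc (length Q)" "v = wv Q ! n" using v by (auto simp: in_set_conv_nth)
  have "n \<noteq> 0"
  proof
    assume "n = 0" then show False using n v by simp
  qed
  moreover have "n \<noteq> length Q" using n v Qlast Q by auto
  ultimately show ?thesis using n by auto
qed

lemma new_edge: "e \<in> arcs G' \<Longrightarrow> e \<notin> arcs G \<Longrightarrow> \<exists>Q\<in>QS. \<exists>m<length Q. e = Q!m"
proof -
  assume "e \<in> arcs G'" "e \<notin> arcs G"
  then obtain Q where "Q \<in> QS" "e \<in> set Q" using QS_arcs by blast
  then show ?thesis by (metis in_set_conv_nth)
qed

lemma new_vert: "v \<in> verts G' \<Longrightarrow> v \<notin> verts G \<Longrightarrow> \<exists>Q\<in>QS. \<exists>n. 0 < n \<and> n < length Q \<and> v = wv Q ! n"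
  using QS_verts Qinner_ex by blast

lemma old_tail_in: "e \<in> arcs G \<Longrightarrow> xtail G' f' e \<in> verts G"
  using old_x wfG xtail_in by metis

lemma old_head_in: "e \<in> arcs G \<Longrightarrow> xhead G' f' e \<in> verts G"
  using old_x wfG xhead_in by metis

lemma U:
  assumes Q: "Q \<in> QS" and n: "0 < n" "n < length Q" and e: "e \<in> arcs G'" "xtail G' f' e = wv Q ! n"
  shows "e = Q ! n"
proof -
  have nv: "wv Q ! n \<notin> verts G" "wv Q ! n \<in> inner Q" using Qinner_idx Q n by auto
  then have "e \<notin> arcs G" using e old_tail_in by metis
  then obtain Q' m where Q': "Q' \<in> QS" "m < length Q'" "e = Q'!m" using new_edge e by blast
  have t: "xtail G' f' e = wv Q' ! m" using Qtail Q' by simp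
  have "m \<noteq> 0"
  proof
    assume "m = 0" then have "xtail G' f' e = I" using t by simp
    then show False using e nv IJ by simp
  qed
  then have i1: "wv Q' ! m \<in> inner Q'" using Qinner_idx Q' by auto
  have "Q' = Q"
  proof (rule ccontr)
    assume "Q' \<noteq> Q"
    then have "inner Q' \<inter> inner Q = {}" using QS_disj[of Q' Q] Q Q' by blast
    then show False using i1 nv t e by auto
  qed
  then have "m = n" using t e Qdist[OF Q] n Q' by (simp add: nth_eq_iff_index_eq)
  then show ?thesis using Q' \<open>Q' = Q\<close> by simp
qed

lemma U':
  assumes Q: "Q \<in> QS" and n: "0 < n" "n < length Q" and e: "e \<in> arcs G'" "xhead G' f' e = wv Q ! n"
  shows "e = Q ! (n - 1)"
proof -
  have nv: "wv Q ! n \<notin> verts G" "wv Q ! n \<in> inner Q" using Qinner_idx Q n by auto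
  then have "e \<notin> arcs G" using e old_head_in by metis
  then obtain Q' m where Q': "Q' \<in> QS" "m < length Q'" "e = Q'!m" using new_edge e by blast
  have t: "xhead G' f' e = wv Q' ! Suc m" using Qhead Q' by simp
  have "Suc m \<noteq> length Q'" using t e nv IJ Qlast Q' by auto
  then have i1: "wv Q' ! Suc m \<in> inner Q'" using Qinner_idx Q' by auto
  have "Q' = Q"
  proof (rule ccontr)
    assume "Q' \<noteq> Q"
    then have "inner Q' \<inter> inner Q = {}" using QS_disj[of Q' Q] Q Q' by blast
    then show False using i1 nv t e by auto
  qed
  then have "Suc m = n" using t e Qdist[OF Q] n Q' by (simp add: nth_eq_iff_index_eq)
  then show ?thesis using Q' \<open>Q' = Q\<close> by auto
qed

end

context setting begin

lemma D:
  assumes Q: "Q \<in> QS"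
  shows "k < length Q \<Longrightarrow> xwalk G' f' (wv Q ! Suc k) es b \<Longrightarrow>
    (\<exists>m. k \<le> m \<and> Suc m < length Q \<and> b = wv Q ! Suc m \<and> es = take (m - k) (drop (Suc k) Q)) \<or>
    (\<exists>rest. es = drop (Suc k) Q @ rest \<and> xwalk G' f' J rest b)"
proof (induction es arbitrary: k)
  case Nil
  show ?case
  proof (cases "Suc k < length Q")
    case True then show ?thesis using Nil by auto
  next
    case False
    then have "Suc k = length Q" using Nil by simp
    then show ?thesis using Nil Qlast[OF Q] by auto
  qed
next
  case (Cons e es)
  have w: "e \<in> arcs G'" "xtail G' f' e = wv Q ! Suc k" "xwalk G' f' (xhead G' f' e) es b"
    using Cons.prems by auto
  show ?case
  proof (cases "Suc k < length Q")
    case False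
    then have "Suc k = length Q" using Cons by simp
    then have "xwalk G' f' J (e # es) b" using Cons.prems Qlast[OF Q] by simp
    then show ?thesis using \<open>Suc k = length Q\<close> by auto
  next
    case True
    have eq: "e = Q ! Suc k" using U[OF Q _ True w(1,2)] by simp
    have hd: "xhead G' f' e = wv Q ! Suc (Suc k)" using eq Qhead True by simp
    have dr: "drop (Suc k) Q = Q ! Suc k # drop (Suc (Suc k)) Q" using True by (simp add: Cons_nth_drop_Suc)
    from Cons.IH[OF True] w(3) hd
    have "(\<exists>m. Suc k \<le> m \<and> Suc m < length Q \<and> b = wv Q ! Suc m \<and> es = take (m - Suc k) (drop (Suc (Suc k)) Q)) \<or>
      (\<exists>rest. es = drop (Suc (Suc k)) Q @ rest \<and> xwalk G' f' J rest b)" by simp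
    then show ?thesis
    proof
      assume "\<exists>m. Suc k \<le> m \<and> Suc m < length Q \<and> b = wv Q ! Suc m \<and> es = take (m - Suc k) (drop (Suc (Suc k)) Q)"
      then obtain m where m: "Suc k \<le> m" "Suc m < length Q" "b = wv Q ! Suc m" "es = take (m - Suc k) (drop (Suc (Suc k)) Q)" by blast
      have "m - k = Suc (m - Suc k)" using m by simp
      then have "e # es = take (m - k) (drop (Suc k) Q)" using m dr eq by simp
      then show ?thesis using m by (intro disjI1 exI[of _ m]) auto
    next
      assume "\<exists>rest. es = drop (Suc (Suc k)) Q @ rest \<and> xwalk G' f' J rest b"
      then obtain rest where "es = drop (Suc (Suc k)) Q @ rest" "xwalk G' f' J rest b" by blast
      then show ?thesis using dr eq by auto
    qed
  qed
qed

definition hh where "hh e = (if e \<in> arcs G then e else e0)"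
definition coll where "coll es = map hh (filter (\<lambda>e. e \<in> arcs G \<or> xtail G' f' e = I) es)"

lemma coll_Nil[simp]: "coll [] = []" by (simp add: coll_def)
lemma coll_append: "coll (xs @ ys) = coll xs @ coll ys" by (simp add: coll_def)
lemma coll_Cons: "coll (e # es) = (if e \<in> arcs G \<or> xtail G' f' e = I then hh e # coll es else coll es)"
  by (simp add: coll_def)

lemma collQ: assumes Q: "Q \<in> QS" shows "coll Q = [e0]"
proof -
  obtain e r where Qe: "Q = e # r" using QS_ne[OF Q] by (cases Q) auto
  have "xtail G' f' e = I" using Qtail[OF Q, of 0] Qe by simp
  moreover have en: "e \<notin> arcs G" using QS_new[OF Q] Qe by auto
  moreover have "coll r = []"
  proof -
    have "\<not> (x \<in> arcs G \<or> xtail G' f' x = I)" if x: "x \<in> set r" for x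
    proof -
      obtain m where m: "m < length r" "x = r ! m" using x by (auto simp: in_set_conv_nth)
      then have xq: "x = Q ! Suc m" "Suc m < length Q" using Qe by auto
      have "xtail G' f' x = wv Q ! Suc m" using xq Qtail[OF Q] by simp
      moreover have "wv Q ! Suc m \<notin> verts G" using Qinner_idx[OF Q, of "Suc m"] xq by simp
      moreover have "x \<notin> arcs G" using QS_new[OF Q] Qe x by auto
      ultimately show ?thesis using IJ by auto
    qed
    then show ?thesis by (simp add: coll_def filter_empty_conv)
  qed
  ultimately show ?thesis using Qe by (simp add: coll_Cons hh_def)
qed

lemma filterQ: assumes Q: "Q \<in> QS" shows "filter (\<lambda>v. v \<in> verts G) (wv Q) = [I, J]"
proof -
  define M where "M = map (xhead G' f') Q"
  have wvM: "wv Q = I # M" by (simp add: M_def walk_verts_def)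
  have Mne: "M \<noteq> []" using QS_ne[OF Q] by (simp add: M_def)
  have "last (wv Q) = J" using xwalk_last Qwalk[OF Q] by metis
  then have "last M = J" using wvM Mne by simp
  then have Mb: "M = butlast M @ [J]" using Mne by (metis append_butlast_last_id)
  have d: "distinct (I # butlast M @ [J])" using Qdist[OF Q] wvM Mb by metis
  have "\<forall>v \<in> set (butlast M). v \<notin> verts G"
  proof
    fix v assume v: "v \<in> set (butlast M)"
    then have "v \<noteq> I" "v \<noteq> J" using d by auto
    moreover have "v \<in> set (wv Q)" using v wvM Mb by (metis in_set_butlastD list.set_intros(2))
    ultimately show "v \<notin> verts G" using QS_inner[OF Q] by auto
  qed
  then have "filter (\<lambda>v. v \<in> verts G) (butlast M) = []" by (simp add: filter_empty_conv)
  then show ?thesis using wvM Mb IJ by (metis filter.simps append_Nil filter_append)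
qed

lemma C:
  "xwalk G' f' a es b \<Longrightarrow> a \<in> verts G \<Longrightarrow> b \<in> verts G \<Longrightarrow>
    xwalk G f a (coll es) b \<and>
    walk_verts G f a (coll es) = filter (\<lambda>v. v \<in> verts G) (walk_verts G' f' a es) \<and>
    (\<forall>e\<in>set es. hh e \<in> set (coll es)) \<and> (es \<noteq> [] \<longrightarrow> coll es \<noteq> [])"
proof (induction "length es" arbitrary: a es rule: less_induct)
  case less
  show ?case
  proof (cases es)
    case Nil then show ?thesis using less.prems by simp
  next
    case (Cons e es')
    have w: "e \<in> arcs G'" "xtail G' f' e = a" "xwalk G' f' (xhead G' f' e) es' b"
      using less.prems Cons by auto
    show ?thesis
    proof (cases "e \<in> arcs G")
      case True
      have ox: "xtail G f e = a" "xhead G f e = xhead G' f' e" using old_x True w by auto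
      have hin: "xhead G' f' e \<in> verts G" using old_head_in True by simp
      have IH: "xwalk G f (xhead G' f' e) (coll es') b \<and>
        walk_verts G f (xhead G' f' e) (coll es') = filter (\<lambda>v. v \<in> verts G) (walk_verts G' f' (xhead G' f' e) es') \<and>
        (\<forall>e\<in>set es'. hh e \<in> set (coll es'))"
        using less.hyps[of es' "xhead G' f' e"] Cons w(3) hin less.prems(3) by auto
      have ce: "coll es = e # coll es'" using Cons True by (simp add: coll_Cons hh_def)
      show ?thesis using IH ce ox True Cons less.prems(2)
        by (auto simp: walk_verts_Cons hh_def)
    next
      case False
      obtain Q m where Qm: "Q \<in> QS" "m < length Q" "e = Q ! m" using new_edge w(1) False by blast
      have "xtail G' f' e = wv Q ! m" using Qtail Qm by simp
      then have m0: "m = 0"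
        using Qinner_idx[OF Qm(1), of m] Qm(2) less.prems(2) w(2) by (metis gr0I)
      then have aI: "a = I" using Qtail[OF Qm(1), of 0] Qm w(2) by simp
      have hx: "xhead G' f' e = wv Q ! Suc 0" using Qhead Qm m0 by simp
      from D[OF Qm(1), of 0 es' b] w(3) hx Qm(2) m0
      have "(\<exists>m'. Suc m' < length Q \<and> b = wv Q ! Suc m' \<and> es' = take m' (drop (Suc 0) Q)) \<or>
        (\<exists>rest. es' = drop (Suc 0) Q @ rest \<and> xwalk G' f' J rest b)" by simp
      moreover have "\<not> (\<exists>m'. Suc m' < length Q \<and> b = wv Q ! Suc m' \<and> es' = take m' (drop (Suc 0) Q))"
        using Qinner_idx(2)[OF Qm(1)] less.prems(3) by blast
      ultimately obtain rest where r: "es' = drop (Suc 0) Q @ rest" "xwalk G' f' J rest b" by blast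
      have esQ: "es = Q @ rest" using Cons r Qm m0 QS_ne[OF Qm(1)]
        by (metis Cons_nth_drop_Suc append_Cons drop0 length_greater_0_conv)
      have lr: "length rest < length es" using esQ QS_ne[OF Qm(1)] by simp
      have IH: "xwalk G f J (coll rest) b \<and>
        walk_verts G f J (coll rest) = filter (\<lambda>v. v \<in> verts G) (walk_verts G' f' J rest) \<and>
        (\<forall>e\<in>set rest. hh e \<in> set (coll rest))"
        using less.hyps[OF lr r(2)] IJ less.prems(3) by auto
      have ce: "coll es = e0 # coll rest" using esQ collQ[OF Qm(1)] by (simp add: coll_append)
      have xw: "xwalk G f a (coll es) b" using ce IH aI e0 by simp
      have "walk_verts G f a (coll es) = I # walk_verts G f J (coll rest)"
        using ce aI by (simp add: walk_verts_Cons)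
      also have "\<dots> = I # J # filter (\<lambda>v. v \<in> verts G) (map (xhead G' f') rest)"
        using IH IJ by (simp add: walk_verts_def)
      also have "\<dots> = filter (\<lambda>v. v \<in> verts G) (walk_verts G' f' a es)"
        using esQ aI filterQ[OF Qm(1)] by (simp add: walk_verts_append)
      finally have wv: "walk_verts G f a (coll es) = filter (\<lambda>v. v \<in> verts G) (walk_verts G' f' a es)" .
      have "\<forall>x\<in>set es. hh x \<in> set (coll es)"
      proof
        fix x assume "x \<in> set es"
        then consider "x \<in> set Q" | "x \<in> set rest" using esQ by auto
        then show "hh x \<in> set (coll es)"
        proof cases
          case 1 then have "x \<notin> arcs G" using QS_new[OF Qm(1)] by auto
          then show ?thesis using ce by (simp add: hh_def)
        next
          case 2 then show ?thesis using IH ce by simp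
        qed
      qed
      then show ?thesis using xw wv ce by simp
    qed
  qed
qed

end

context setting begin

lemma K:
  assumes c: "confluence G' f' a b p q"
  shows "a \<in> verts G \<and> b \<in> verts G"
proof -
  have ab: "a \<noteq> b" and pn: "p \<noteq> []" and qn: "q \<noteq> []" using confluence_basic[OF c] by auto
  have pp: "xpath G' f' a p b" and qp: "xpath G' f' a q b" and pq: "p \<noteq> q"
    and int: "set (walk_verts G' f' a p) \<inter> set (walk_verts G' f' a q) \<subseteq> {a, b}"
    using c by (auto simp: confluence_def)
  have pw: "xwalk G' f' a p b" and qw: "xwalk G' f' a q b" using pp qp by (auto simp: xpath_def)
  have inG': "a \<in> verts G'" "b \<in> verts G'" using xwalk_end_in[OF wfG' pw pn] by auto
  have bG: "b \<in> verts G"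
  proof (rule ccontr)
    assume nb: "b \<notin> verts G"
    obtain Q n where Qn: "Q \<in> QS" "0 < n" "n < length Q" "b = wv Q ! n" using new_vert inG'(2) nb by blast
    have lp: "last p = Q ! (n - 1)"
      using U'[OF Qn(1-3)] xwalk_last_head[OF pw pn] xwalk_arcs[OF pw] pn Qn(4) by (metis last_in_set subsetD)
    have lq: "last q = Q ! (n - 1)"
      using U'[OF Qn(1-3)] xwalk_last_head[OF qw qn] xwalk_arcs[OF qw] qn Qn(4) by (metis last_in_set subsetD)
    define c where "c = xtail G' f' (Q ! (n - 1))"
    have cp: "c \<in> set (walk_verts G' f' a p)"
      using xwalk_last_tail[OF pw pn] lp pn unfolding c_def by (metis diff_less length_greater_0_conv length_walk_verts less_Suc_eq nth_mem zero_less_one)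
    have cq: "c \<in> set (walk_verts G' f' a q)"
      using xwalk_last_tail[OF qw qn] lq qn unfolding c_def by (metis diff_less length_greater_0_conv length_walk_verts less_Suc_eq nth_mem zero_less_one)
    have "c = wv Q ! (n - 1)" using Qtail[OF Qn(1)] Qn unfolding c_def by simp
    moreover have "wv Q ! (n - 1) \<noteq> wv Q ! n"
      using nth_eq_iff_index_eq[OF Qdist[OF Qn(1)], of "n - 1" n] Qn by simp
    ultimately have "c \<noteq> b" using Qn by simp
    then have "c = a" using cp cq int by auto
    then have "p = [last p]" "q = [last q]"
      using path_single_tail[OF pp pn] path_single_tail[OF qp qn] lp lq unfolding c_def by auto
    then show False using pq lp lq by metis
  qed
  have aG: "a \<in> verts G"
  proof (rule ccontr)
    assume na: "a \<notin> verts G"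
    obtain Q n where Qn: "Q \<in> QS" "0 < n" "n < length Q" "a = wv Q ! n" using new_vert inG'(1) na by blast
    have hp: "hd p = Q ! n"
      using U[OF Qn(1-3)] xwalk_hd_tail[OF pw pn] xwalk_arcs[OF pw] pn Qn(4) by (metis hd_in_set subsetD)
    have hq: "hd q = Q ! n"
      using U[OF Qn(1-3)] xwalk_hd_tail[OF qw qn] xwalk_arcs[OF qw] qn Qn(4) by (metis hd_in_set subsetD)
    define c where "c = xhead G' f' (Q ! n)"
    have cp: "c \<in> set (walk_verts G' f' a p)" using hp pn unfolding c_def by (cases p) (auto simp: walk_verts_def)
    have cq: "c \<in> set (walk_verts G' f' a q)" using hq qn unfolding c_def by (cases q) (auto simp: walk_verts_def)
    have "c \<noteq> a"
    proof
      assume "c = a"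
      then have "walk_verts G' f' a p ! 1 = walk_verts G' f' a p ! 0"
        using hp pn unfolding c_def by (cases p) (auto simp: walk_verts_def)
      then show False using nth_eq_iff_index_eq[of "walk_verts G' f' a p" 1 0] pp pn
        by (cases p) (auto simp: xpath_def)
    qed
    then have "c = b" using cp cq int by auto
    then have "p = [hd p]" "q = [hd q]"
      using path_single_head[OF pp pn] path_single_head[OF qp qn] hp hq unfolding c_def by auto
    then show False using pq hp hq by metis
  qed
  show ?thesis using aG bG by simp
qed

lemma coll_old: "set p \<subseteq> arcs G \<Longrightarrow> coll p = p"
proof -
  assume "set p \<subseteq> arcs G"
  then have "filter (\<lambda>e. e \<in> arcs G \<or> xtail G' f' e = I) p = p" by (auto intro: filter_True)
  moreover have "map hh p = p" using \<open>set p \<subseteq> arcs G\<close> by (induction p) (auto simp: hh_def)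
  ultimately show ?thesis by (simp add: coll_def)
qed

lemma M:
  assumes c: "confluence G' f' a b p q"
  shows "(confluence G f a b (coll p) (coll q) \<and> (\<forall>e\<in>set p \<union> set q. hh e \<in> set (coll p) \<union> set (coll q)))
    \<or> (a = I \<and> b = J \<and> coll p = [e0] \<and> coll q = [e0])"
proof -
  have ab: "a \<noteq> b" and pn: "p \<noteq> []" and qn: "q \<noteq> []" using confluence_basic[OF c] by auto
  have pp: "xpath G' f' a p b" and qp: "xpath G' f' a q b" and pq: "p \<noteq> q"
    and int: "set (walk_verts G' f' a p) \<inter> set (walk_verts G' f' a q) \<subseteq> {a, b}"
    using c by (auto simp: confluence_def)
  have pw: "xwalk G' f' a p b" and qw: "xwalk G' f' a q b" using pp qp by (auto simp: xpath_def)
  have abG: "a \<in> verts G" "b \<in> verts G" using K[OF c] by auto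
  note Cp = C[OF pw abG] and Cq = C[OF qw abG]
  have cpp: "xpath G f a (coll p) b" using Cp pp by (simp add: xpath_def)
  have cqp: "xpath G f a (coll q) b" using Cq qp by (simp add: xpath_def)
  have sp: "set (walk_verts G f a (coll p)) \<subseteq> set (walk_verts G' f' a p)" using Cp by auto
  have sq: "set (walk_verts G f a (coll q)) \<subseteq> set (walk_verts G' f' a q)" using Cq by auto
  have hs: "\<forall>e\<in>set p \<union> set q. hh e \<in> set (coll p) \<union> set (coll q)" using Cp Cq by auto
  show ?thesis
  proof (cases "coll p = coll q")
    case False
    then have "confluence G f a b (coll p) (coll q)" using cpp cqp sp sq int by (auto simp: confluence_def)
    then show ?thesis using hs by simp
  next
    case True
    define cc where "cc = coll p"
    have ccq: "coll q = cc" using True cc_def by simp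
    have sub: "set (walk_verts G f a cc) \<subseteq> {a, b}" using sp sq int ccq cc_def by auto
    have dcc: "distinct (walk_verts G f a cc)" using cpp cc_def by (simp add: xpath_def)
    have "length (walk_verts G f a cc) = card (set (walk_verts G f a cc))" using distinct_card[OF dcc] by simp
    also have "\<dots> \<le> card {a, b}" using sub by (intro card_mono) auto
    also have "\<dots> \<le> 2" by (simp add: card_insert_if)
    finally have "length cc \<le> 1" by simp
    moreover have "cc \<noteq> []" using Cp pn cc_def by simp
    ultimately obtain x where x: "cc = [x]" by (cases cc) auto
    have xw: "xwalk G f a [x] b" using cpp x cc_def by (simp add: xpath_def)
    show ?thesis
    proof (cases "x = e0")
      case True
      then show ?thesis using xw x cc_def ccq by auto
    next
      case False
      have old: "set r \<subseteq> arcs G" "set r \<subseteq> {x}" if r: "r \<in> {p, q}" for r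
      proof -
        have "hh e \<in> {x}" if "e \<in> set r" for e
          using Cp Cq x cc_def ccq r that by auto
        then have hy: "hh y = x" if "y \<in> set r" for y using that by simp
        show "set r \<subseteq> arcs G"
        proof
          fix y assume "y \<in> set r"
          then have "hh y = x" using hy by simp
          then show "y \<in> arcs G" using False by (auto simp: hh_def split: if_splits)
        qed
        show "set r \<subseteq> {x}"
        proof
          fix y assume "y \<in> set r"
          then have "hh y = x" using hy by simp
          then show "y \<in> {x}" using False by (auto simp: hh_def split: if_splits)
        qed
      qed
      have "p = [x]" using coll_old[OF old(1)[of p]] x cc_def by simp
      moreover have "q = [x]" using coll_old[OF old(1)[of q]] x ccq by simp
      ultimately show ?thesis using pq by simp
    qed
  qed
qed

lemma Lab:
  assumes "b \<in> label_set G' f' e"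
  shows "b \<in> label_set G f (hh e) \<or> (b = J \<and> hh e = e0)"
proof -
  obtain a p q where c: "confluence G' f' a b p q" "e \<in> set p \<union> set q"
    using assms by (auto simp: label_set_def)
  from M[OF c(1)] show ?thesis
  proof
    assume "confluence G f a b (coll p) (coll q) \<and> (\<forall>e\<in>set p \<union> set q. hh e \<in> set (coll p) \<union> set (coll q))"
    then show ?thesis using c(2) by (auto simp: label_set_def)
  next
    assume "a = I \<and> b = J \<and> coll p = [e0] \<and> coll q = [e0]"
    moreover have "hh e \<in> set (coll p) \<union> set (coll q)"
      using c K[OF c(1)] C by (auto simp: confluence_def xpath_def)
    ultimately show ?thesis by simp
  qed
qed

lemma Lam_aux:
  assumes p: "xpath G f a p J" and e1: "e1 \<in> set p" "xtail G f e1 = I" "e1 \<noteq> e0"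
  shows "J \<in> label_set G f e0"
proof -
  obtain p1 p2 where sp: "p = p1 @ e1 # p2" using e1 split_list by metis
  have sfx: "xpath G f I (e1 # p2) J" using suffix_path[of G f a p1 e1 p2 J] p sp e1 by simp
  have e0p: "xpath G f I [e0] J" using e0 IJ by (simp add: xpath_def walk_verts_def)
  have "confluence G f I J [e0] (e1 # p2)"
    using e0p sfx e1 by (auto simp: confluence_def walk_verts_def)
  moreover have "e0 \<in> set [e0] \<union> set (e1 # p2)" by simp
  ultimately show ?thesis unfolding label_set_def by blast
qed

lemma Lam:
  assumes e1: "xtail G f e1 = I" "J \<in> label_set G f e1"
  shows "J \<in> label_set G f e0"
proof (cases "e1 = e0")
  case True then show ?thesis using e1 by simp
next
  case False
  obtain a p q where c: "confluence G f a J p q" "e1 \<in> set p \<union> set q"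
    using e1 by (auto simp: label_set_def)
  then have "xpath G f a p J" "xpath G f a q J" by (auto simp: confluence_def)
  then show ?thesis using c(2) Lam_aux e1 False by blast
qed

lemma eo': "is_extraction_order G' f' s"
proof -
  have sG: "s \<in> verts G" using eo by (simp add: is_extraction_order_def)
  have sG': "s \<in> verts G'" using sG ext by (auto simp: extends_def)
  have reachG: "\<exists>es. xwalk G' f' s es v" if "v \<in> verts G" for v
    using eo that lift unfolding is_extraction_order_def by metis
  have reach: "\<exists>es. xwalk G' f' s es v" if v: "v \<in> verts G'" for v
  proof (cases "v \<in> verts G")
    case True then show ?thesis using reachG by simp
  next
    case False
    obtain Q n where Qn: "Q \<in> QS" "0 < n" "n < length Q" "v = wv Q ! n" using new_vert v False by blast
    obtain es where es: "xwalk G' f' s es I" using reachG IJ by blast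
    have "xwalk G' f' I (take n Q) v" using xwalk_take[OF Qwalk[OF Qn(1)], of n] Qn by simp
    then have "xwalk G' f' s (es @ take n Q) v" using es xwalk_append by metis
    then show ?thesis by blast
  qed
  have acyc: "\<not> xwalk G' f' v es v" if ne: "es \<noteq> []" for v es
  proof
    assume w: "xwalk G' f' v es v"
    have vG': "v \<in> verts G'" using xwalk_end_in[OF wfG' w ne] by simp
    show False
    proof (cases "v \<in> verts G")
      case True
      then have "xwalk G f v (coll es) v" "coll es \<noteq> []" using C[OF w True True] ne by auto
      then show False using eo unfolding is_extraction_order_def by blast
    next
      case False
      obtain Q n where Qn: "Q \<in> QS" "0 < n" "n < length Q" "v = wv Q ! n" using new_vert vG' False by blast
      have sk: "Suc (n - 1) = n" using Qn by simp
      from D[OF Qn(1), of "n - 1" es v] w Qn sk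
      have "(\<exists>m. n - 1 \<le> m \<and> Suc m < length Q \<and> v = wv Q ! Suc m \<and> es = take (m - (n - 1)) (drop n Q)) \<or>
        (\<exists>rest. es = drop n Q @ rest \<and> xwalk G' f' J rest v)" by simp
      then show False
      proof
        assume "\<exists>m. n - 1 \<le> m \<and> Suc m < length Q \<and> v = wv Q ! Suc m \<and> es = take (m - (n - 1)) (drop n Q)"
        then obtain m where m: "n - 1 \<le> m" "Suc m < length Q" "v = wv Q ! Suc m" "es = take (m - (n - 1)) (drop n Q)" by blast
        have "Suc m = n" using nth_eq_iff_index_eq[OF Qdist[OF Qn(1)], of "Suc m" n] m Qn by simp
        then show False using m ne by simp
      next
        assume "\<exists>rest. es = drop n Q @ rest \<and> xwalk G' f' J rest v"
        then obtain rest where r: "es = drop n Q @ rest" "xwalk G' f' J rest v" by blast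
        have QQ: "xwalk G' f' I (take n Q @ drop n Q) J" using Qwalk[OF Qn(1)] by simp
        then obtain c where c: "xwalk G' f' I (take n Q) c" "xwalk G' f' c (drop n Q) J" using xwalk_append by metis
        have "xwalk G' f' I (take n Q) v" using xwalk_take[OF Qwalk[OF Qn(1)], of n] Qn by simp
        then have "c = v" using c(1) xwalk_end_unique by metis
        then have "xwalk G' f' J (rest @ drop n Q) J" using c(2) r(2) xwalk_append by metis
        moreover have "rest @ drop n Q \<noteq> []" using Qn by simp
        ultimately have "xwalk G f J (coll (rest @ drop n Q)) J" "coll (rest @ drop n Q) \<noteq> []"
          using C[of J "rest @ drop n Q" J] IJ by auto
        then show False using eo unfolding is_extraction_order_def by blast
      qed
    qed
  qed
  show ?thesis using sG' reach acyc unfolding is_extraction_order_def by blast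
qed

end

context setting begin

lemma outh: "v \<in> verts G \<Longrightarrow> e \<in> out_arcs G' f' v \<Longrightarrow> hh e \<in> out_arcs G f v"
proof -
  assume v: "v \<in> verts G" and e: "e \<in> out_arcs G' f' v"
  have ea: "e \<in> arcs G'" and et: "xtail G' f' e = v" using e by (simp_all add: out_arcs_def)
  show ?thesis
  proof (cases "e \<in> arcs G")
    case True
    then have "xtail G f e = v" using old_x et by simp
    then show ?thesis using True by (simp add: out_arcs_def hh_def)
  next
    case False
    obtain Q m where Qm: "Q \<in> QS" "m < length Q" "e = Q ! m" using new_edge[OF ea False] by blast
    have tq: "wv Q ! m = v" using Qtail[OF Qm(1,2)] Qm(3) et by simp
    have "\<not> 0 < m"
    proof
      assume "0 < m"
      then have "wv Q ! m \<notin> verts G" using Qinner_idx(2)[OF Qm(1)] Qm(2) by blast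
      then show False using tq v by simp
    qed
    then have "m = 0" by simp
    then have "v = I" using tq by simp
    then show ?thesis using False e0 by (simp add: out_arcs_def hh_def)
  qed
qed

lemma relstep:
  assumes v: "v \<in> verts G" and r: "bag_rel G' f' v e e'"
  shows "(bag_rel G f v)\<^sup>*\<^sup>* (hh e) (hh e')"
proof -
  have o: "hh e \<in> out_arcs G f v" "hh e' \<in> out_arcs G f v" using r outh v by (auto simp: bag_rel_def)
  obtain b where b: "b \<in> label_set G' f' e" "b \<in> label_set G' f' e'"
    using r by (auto simp: bag_rel_def)
  have l1: "b \<in> label_set G f (hh e) \<or> (b = J \<and> hh e = e0)" using Lab b(1) by simp
  have l2: "b \<in> label_set G f (hh e') \<or> (b = J \<and> hh e' = e0)" using Lab b(2) by simp
  have vI: "hh x = e0 \<Longrightarrow> hh x \<in> out_arcs G f v \<Longrightarrow> v = I" for x by (simp add: out_arcs_def)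
  have tI: "xtail G f y = I" if "y \<in> out_arcs G f v" "v = I" for y using that by (simp add: out_arcs_def)
  show ?thesis
  proof (cases "b \<in> label_set G f (hh e) \<and> b \<in> label_set G f (hh e')")
    case True
    then have "bag_rel G f v (hh e) (hh e')" using o by (auto simp: bag_rel_def)
    then show ?thesis by blast
  next
    case False
    show ?thesis
    proof (cases "hh e = hh e'")
      case True then show ?thesis by simp
    next
      case ne: False
      then have "(b \<in> label_set G f (hh e) \<and> b = J \<and> hh e' = e0) \<or> (b \<in> label_set G f (hh e') \<and> b = J \<and> hh e = e0)"
        using l1 l2 False by auto
      then show ?thesis
      proof
        assume a: "b \<in> label_set G f (hh e) \<and> b = J \<and> hh e' = e0"
        then have "v = I" using vI o(2) by blast
        then have "J \<in> label_set G f e0" using Lam tI o(1) a by blast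
        then have "bag_rel G f v (hh e) (hh e')" using o a by (auto simp: bag_rel_def)
        then show ?thesis by blast
      next
        assume a: "b \<in> label_set G f (hh e') \<and> b = J \<and> hh e = e0"
        then have "v = I" using vI o(1) by blast
        then have "J \<in> label_set G f e0" using Lam tI o(2) a by blast
        then have "bag_rel G f v (hh e) (hh e')" using o a by (auto simp: bag_rel_def)
        then show ?thesis by blast
      qed
    qed
  qed
qed

lemma relstar:
  assumes v: "v \<in> verts G" shows "(bag_rel G' f' v)\<^sup>*\<^sup>* e x \<Longrightarrow> (bag_rel G f v)\<^sup>*\<^sup>* (hh e) (hh x)"
proof (induction rule: rtranclp_induct)
  case base then show ?case by simp
next
  case (step y z)
  then show ?case using relstep[OF v step(2)] by (metis rtranclp_trans)
qed

lemma Lab_sub: "label_set G' f' x \<subseteq> label_set G f (hh x) \<union> {J}"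
  using Lab by blast

lemma bags_fin: "wf_dgraph H \<Longrightarrow> finite (bags H g)"
proof -
  assume wf: "wf_dgraph H"
  have "bags H g \<subseteq> Pow (arcs H)" by (auto simp: bags_def out_arcs_def)
  moreover have "finite (arcs H)" using wf by (simp add: wf_dgraph_def)
  ultimately show ?thesis by (meson finite_Pow_iff finite_subset)
qed

lemma bls_fin: "finite (bag_label_set G f B)"
proof -
  have "bag_label_set G f B \<subseteq> verts G" using label_in_verts[OF wfG] by (auto simp: bag_label_set_def)
  then show ?thesis using wfG finite_subset by (auto simp: wf_dgraph_def)
qed

lemma bag_cover:
  assumes B': "B' \<in> bags G' f'"
  shows "\<exists>B \<in> bags G f. bag_label_set G' f' B' \<subseteq> bag_label_set G f B \<union> {J}"
proof -
  obtain v e where ve: "v \<in> verts G'" "e \<in> out_arcs G' f' v"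
    "B' = {x \<in> out_arcs G' f' v. (bag_rel G' f' v)\<^sup>*\<^sup>* e x}"
    using B' by (auto simp: bags_def)
  show ?thesis
  proof (cases "v \<in> verts G")
    case True
    define B where "B = {y \<in> out_arcs G f v. (bag_rel G f v)\<^sup>*\<^sup>* (hh e) y}"
    have Bb: "B \<in> bags G f" using True outh[OF True ve(2)] unfolding B_def bags_def by blast
    have "hh x \<in> B" if "x \<in> B'" for x
      using that ve outh[OF True] relstar[OF True] unfolding B_def by auto
    then have "bag_label_set G' f' B' \<subseteq> bag_label_set G f B \<union> {J}"
      using Lab_sub unfolding bag_label_set_def by blast
    then show ?thesis using Bb by blast
  next
    case False
    define B where "B = {y \<in> out_arcs G f I. (bag_rel G f I)\<^sup>*\<^sup>* e0 y}"
    have eo0: "e0 \<in> out_arcs G f I" using e0 by (simp add: out_arcs_def)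
    have Bb: "B \<in> bags G f" using IJ eo0 unfolding B_def bags_def by blast
    have e0B: "e0 \<in> B" using eo0 unfolding B_def by simp
    have "hh x = e0" if "x \<in> B'" for x
    proof -
      have "x \<in> out_arcs G' f' v" using that ve by simp
      then have "x \<notin> arcs G" using False old_tail_in by (auto simp: out_arcs_def)
      then show ?thesis by (simp add: hh_def)
    qed
    then have "bag_label_set G' f' B' \<subseteq> bag_label_set G f B \<union> {J}"
      using Lab_sub e0B unfolding bag_label_set_def by fastforce
    then show ?thesis using Bb by blast
  qed
qed

lemma width: "xwidth G' f' \<le> xwidth G f + 1"
proof -
  define Mx where "Mx = Max (insert 0 ((\<lambda>B. card (bag_label_set G f B)) ` bags G f))"
  have fin: "finite (insert 0 ((\<lambda>B. card (bag_label_set G f B)) ` bags G f))"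
    using bags_fin[OF wfG] by simp
  have "card (bag_label_set G' f' B') \<le> Mx + 1" if B': "B' \<in> bags G' f'" for B'
  proof -
    obtain B where B: "B \<in> bags G f" "bag_label_set G' f' B' \<subseteq> bag_label_set G f B \<union> {J}"
      using bag_cover[OF B'] by blast
    have "card (bag_label_set G' f' B') \<le> card (bag_label_set G f B \<union> {J})"
      using B(2) bls_fin by (intro card_mono) auto
    also have "\<dots> \<le> card (bag_label_set G f B) + 1" using bls_fin by (simp add: card_insert_if)
    also have "card (bag_label_set G f B) \<le> Mx" unfolding Mx_def using fin B(1) by (intro Max_ge) auto
    finally show ?thesis by simp
  qed
  then have "Max (insert 0 ((\<lambda>B. card (bag_label_set G' f' B)) ` bags G' f')) \<le> Mx + 1"
    using bags_fin[OF wfG'] by (subst Max_le_iff) auto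
  then show ?thesis unfolding xwidth_def Mx_def by simp
qed

end


lemma gen:
  assumes "setting G f s G' f' e0 QS"
  shows "ew G' \<le> xwidth G f + 1"
proof -
  have eo: "is_extraction_order G' f' s" using setting.eo'[OF assms] .
  have "ew G' \<le> xwidth G' (fst (f', s))"
    unfolding ew_def by (rule cINF_lower) (auto simp: eo)
  also have "\<dots> \<le> xwidth G f + 1" using setting.width[OF assms] by simp
  finally show ?thesis .
qed

lemma IJ_ne:
  assumes "e0 \<in> arcs G" "is_extraction_order G f s"
  shows "xtail G f e0 \<noteq> xhead G f e0"
proof
  assume "xtail G f e0 = xhead G f e0"
  then have "xwalk G f (xtail G f e0) [e0] (xtail G f e0)" using assms by simp
  then show False using assms unfolding is_extraction_order_def by blast
qed

lemma edges_case:
  assumes wf: "wf_dgraph G" and e0: "e0 \<in> arcs G" "tail G e0 = i" "head G e0 = j"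
    and eo: "is_extraction_order G f s" and ap: "add_parallel_edges G i j G'"
  shows "ew G' \<le> xwidth G f + 1"
proof -
  define f' where "f' e = (if e \<in> arcs G then f e else (f e0 \<longleftrightarrow> tail G' e = i))" for e
  define QS where "QS = (\<lambda>e. [e]) ` (arcs G' - arcs G)"
  have ne: "xtail G f e0 \<noteq> xhead G f e0" using IJ_ne[OF e0(1) eo] .
  have ij: "i \<noteq> j" using ne e0 by (auto simp: xtail_def xhead_def split: if_splits)
  have wf': "wf_dgraph G'" and ext: "extends G' G" and vv: "verts G' = verts G"
    and nw: "\<And>e. e \<in> arcs G' - arcs G \<Longrightarrow> (tail G' e = i \<and> head G' e = j) \<or> (tail G' e = j \<and> head G' e = i)"
    using ap by (auto simp: add_parallel_edges_def)
  have th: "xtail G' f' e = xtail G f e0 \<and> xhead G' f' e = xhead G f e0" if "e \<in> arcs G' - arcs G" for e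
    using nw[OF that] that ij e0 by (auto simp: f'_def xtail_def xhead_def)
  have pth: "xpath G' f' (xtail G f e0) [e] (xhead G f e0)" if "e \<in> arcs G' - arcs G" for e
    using th[OF that] that ne by (simp add: xpath_def walk_verts_def)
  have wvs: "set (walk_verts G' f' (xtail G f e0) [e]) - {xtail G f e0, xhead G f e0} = {}" if "e \<in> arcs G' - arcs G" for e
    using th[OF that] by (simp add: walk_verts_def)
  have "setting G f s G' f' e0 QS"
  proof
    show "wf_dgraph G" "wf_dgraph G'" "extends G' G" "e0 \<in> arcs G" "is_extraction_order G f s"
      using wf wf' ext e0 eo by auto
    show "\<And>e. e \<in> arcs G \<Longrightarrow> f' e = f e" by (simp add: f'_def)
    show "\<And>Q. Q \<in> QS \<Longrightarrow> xpath G' f' (xtail G f e0) Q (xhead G f e0)" using pth by (auto simp: QS_def)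
    show "\<And>Q. Q \<in> QS \<Longrightarrow> Q \<noteq> []" by (auto simp: QS_def)
    show "\<And>Q. Q \<in> QS \<Longrightarrow> set Q \<inter> arcs G = {}" by (auto simp: QS_def)
    show "\<And>Q. Q \<in> QS \<Longrightarrow> (set (walk_verts G' f' (xtail G f e0) Q) - {xtail G f e0, xhead G f e0}) \<inter> verts G = {}"
      using wvs by (auto simp: QS_def)
    show "\<And>Q1 Q2. Q1 \<in> QS \<Longrightarrow> Q2 \<in> QS \<Longrightarrow> Q1 \<noteq> Q2 \<Longrightarrow> set Q1 \<inter> set Q2 = {} \<and>
        (set (walk_verts G' f' (xtail G f e0) Q1) - {xtail G f e0, xhead G f e0}) \<inter>
        (set (walk_verts G' f' (xtail G f e0) Q2) - {xtail G f e0, xhead G f e0}) = {}"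
      using wvs by (auto simp: QS_def)
    show "arcs G' - arcs G \<subseteq> (\<Union>Q \<in> QS. set Q)" by (auto simp: QS_def)
    show "verts G' - verts G \<subseteq> (\<Union>Q \<in> QS. set (walk_verts G' f' (xtail G f e0) Q) - {xtail G f e0, xhead G f e0})"
      using vv by simp
  qed
  then show ?thesis by (rule gen)
qed



lemma xhead_False[simp]: "xhead G (\<lambda>_. False) e = head G e" by (simp add: xhead_def)

lemma inner_verts_eq:
  assumes p: "xpath G (\<lambda>_. False) a p b" and ne: "p \<noteq> []"
  shows "inner_verts G p = set (walk_verts G (\<lambda>_. False) a p) - {a, b}"
proof -
  define M where "M = map (head G) p"
  have wvM: "walk_verts G (\<lambda>_. False) a p = a # M" by (simp add: M_def walk_verts_def)
  have Mne: "M \<noteq> []" using ne by (simp add: M_def)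
  have "last (walk_verts G (\<lambda>_. False) a p) = b" using xwalk_last p by (metis xpath_def)
  then have "last M = b" using wvM Mne by simp
  then have Mb: "M = butlast M @ [b]" using Mne by (metis append_butlast_last_id)
  have d: "distinct (a # butlast M @ [b])" using p wvM Mb by (metis xpath_def)
  then have h2: "set (a # butlast M @ [b]) - {a, b} = set (butlast M)" by auto
  have h3: "walk_verts G (\<lambda>_. False) a p = a # butlast M @ [b]" using wvM Mb by metis
  have h1: "inner_verts G p = set (butlast M)" by (simp add: inner_verts_def M_def)
  show ?thesis unfolding h1 h3 h2 ..
qed

lemma paths_case:
  assumes wf: "wf_dgraph G" and e0: "e0 \<in> arcs G" "tail G e0 = i" "head G e0 = j"
    and eo: "is_extraction_order G f s" and ap: "add_parallel_paths G i j G'"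
  shows "ew G' \<le> xwidth G f + 1"
proof -
  have ne: "xtail G f e0 \<noteq> xhead G f e0" using IJ_ne[OF e0(1) eo] .
  have ij: "i \<noteq> j" using ne e0 by (auto simp: xtail_def xhead_def split: if_splits)
  have wf': "wf_dgraph G'" and ext: "extends G' G" using ap by (auto simp: add_parallel_paths_def)
  from ap obtain ps where
    P1': "\<forall>p \<in> set ps. length p \<ge> 2 \<and>
            (xpath G' (\<lambda>_. False) i p j \<or> xpath G' (\<lambda>_. False) j p i) \<and>
            set p \<inter> arcs G = {} \<and> inner_verts G' p \<inter> verts G = {}" and
    P2: "\<forall>k < length ps. \<forall>l < length ps. k \<noteq> l \<longrightarrow>
            set (ps ! k) \<inter> set (ps ! l) = {} \<and>
            inner_verts G' (ps ! k) \<inter> inner_verts G' (ps ! l) = {}" and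
    P3: "arcs G' - arcs G = (\<Union>p \<in> set ps. set p)" and
    P4: "verts G' - verts G = (\<Union>p \<in> set ps. inner_verts G' p)"
    unfolding add_parallel_paths_def by (elim conjE exE) blast
  have P1: "length p \<ge> 2 \<and>
            (xpath G' (\<lambda>_. False) i p j \<or> xpath G' (\<lambda>_. False) j p i) \<and>
            set p \<inter> arcs G = {} \<and> inner_verts G' p \<inter> verts G = {}" if "p \<in> set ps" for p
    using bspec[OF P1' that] .
  have P2': "set p1 \<inter> set p2 = {} \<and> inner_verts G' p1 \<inter> inner_verts G' p2 = {}"
    if pq: "p1 \<in> set ps" "p2 \<in> set ps" "p1 \<noteq> p2" for p1 p2
  proof -
    obtain k where k: "k < length ps" "p1 = ps ! k" using pq(1) by (auto simp: in_set_conv_nth)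
    obtain l where l: "l < length ps" "p2 = ps ! l" using pq(2) by (auto simp: in_set_conv_nth)
    have "k \<noteq> l" using pq(3) k l by auto
    then show ?thesis using P2 k l by auto
  qed
  have uniq: "p1 = p2" if "p1 \<in> set ps" "p2 \<in> set ps" "e \<in> set p1" "e \<in> set p2" for p1 p2 e
  proof (rule ccontr)
    assume "p1 \<noteq> p2"
    then have "set p1 \<inter> set p2 = {}" using P2'[OF that(1,2)] by simp
    then show False using that(3,4) by auto
  qed
  define dir where "dir p = xpath G' (\<lambda>_. False) i p j" for p
  define f' where "f' e = (if e \<in> arcs G then f e else (f e0 \<longleftrightarrow> (\<exists>p\<in>set ps. e \<in> set p \<and> dir p)))" for e
  define Qf where "Qf p = (if dir p = f e0 then rev p else p)" for p
  define QS where "QS = Qf ` set ps"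
  define I where "I = xtail G f e0"
  define J where "J = xhead G f e0"
  have IJv: "I = (if f e0 then j else i)" "J = (if f e0 then i else j)" using e0
    by (auto simp: I_def J_def xtail_def xhead_def)
  have fp: "f' e = (f e0 \<longleftrightarrow> dir p)" if "p \<in> set ps" "e \<in> set p" for p e
  proof -
    have "e \<notin> arcs G" using P1[OF that(1)] that(2) by auto
    moreover have "(\<exists>p'\<in>set ps. e \<in> set p' \<and> dir p') \<longleftrightarrow> dir p"
    proof
      assume "\<exists>p'\<in>set ps. e \<in> set p' \<and> dir p'"
      then obtain p' where "p' \<in> set ps" "e \<in> set p'" "dir p'" by blast
      then show "dir p" using uniq[OF that(1) \<open>p' \<in> set ps\<close> that(2)] by simp
    next
      assume "dir p" then show "\<exists>p'\<in>set ps. e \<in> set p' \<and> dir p'" using that by blast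
    qed
    ultimately show ?thesis by (simp add: f'_def)
  qed
  have Qprops: "xpath G' f' I (Qf p) J \<and> set (walk_verts G' f' I (Qf p)) - {I, J} = inner_verts G' p \<and>
      set (Qf p) = set p" if pp: "p \<in> set ps" for p
  proof -
    have pne: "p \<noteq> []" using P1[OF pp] by auto
    obtain a b where ab: "xpath G' (\<lambda>_. False) a p b" "{a, b} = {i, j}" "dir p \<longleftrightarrow> a = i"
    proof (cases "dir p")
      case True
      then show ?thesis using that[of i j] unfolding dir_def by blast
    next
      case False
      then have "xpath G' (\<lambda>_. False) j p i" using P1[OF pp] unfolding dir_def by blast
      then show ?thesis using that[of j i] False ij by blast
    qed
    have inn: "inner_verts G' p = set (walk_verts G' (\<lambda>_. False) a p) - {i, j}"
      using inner_verts_eq[OF ab(1) pne] ab(2) by simp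
    have IJs: "{I, J} = {i, j}" using IJv by auto
    show ?thesis
    proof (cases "dir p = f e0")
      case True
      then have Q: "Qf p = rev p" by (simp add: Qf_def)
      have g: "f' e = (\<not> False)" if "e \<in> set p" for e using fp[OF pp that] True by simp
      have abw: "xwalk G' (\<lambda>_. False) a p b" "distinct (walk_verts G' (\<lambda>_. False) a p)"
        using ab(1) by (auto simp: xpath_def)
      have R: "xwalk G' f' b (rev p) a" "walk_verts G' f' b (rev p) = rev (walk_verts G' (\<lambda>_. False) a p)"
        using xwalk_rev[of p f' "\<lambda>_. False" G' a b, OF g abw(1)] by auto
      have ba: "b = I" "a = J" using True ab ij IJv by (auto simp: dir_def)
      have "xpath G' f' I (rev p) J" using R abw(2) ba by (simp add: xpath_def)
      moreover have "set (walk_verts G' f' I (rev p)) = set (walk_verts G' (\<lambda>_. False) a p)"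
        using R ba by simp
      ultimately have "xpath G' f' I (rev p) J" and "set (walk_verts G' f' I (rev p)) = set (walk_verts G' (\<lambda>_. False) a p)"
        by auto
      then show ?thesis using Q inn IJs by simp
    next
      case False
      then have Q: "Qf p = p" by (simp add: Qf_def)
      have g: "f' e = False" if "e \<in> set p" for e using fp[OF pp that] False by simp
      have "a = I" "b = J" using False ab ij IJv by (auto simp: dir_def)
      moreover have c1: "xwalk G' f' a p b = xwalk G' (\<lambda>_. False) a p b"
        by (rule xwalk_cong) (simp add: g)
      moreover have c2: "walk_verts G' f' a p = walk_verts G' (\<lambda>_. False) a p"
        by (rule walk_verts_cong) (simp add: g)
      moreover have "xpath G' f' a p b" using ab(1) c1 c2 unfolding xpath_def by simp
      ultimately show ?thesis using Q inn IJs by simp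
    qed
  qed
  have QP: "xpath G' f' (xtail G f e0) (Qf p) (xhead G f e0)"
    "set (walk_verts G' f' (xtail G f e0) (Qf p)) - {xtail G f e0, xhead G f e0} = inner_verts G' p"
    "set (Qf p) = set p" if "p \<in> set ps" for p
    using Qprops[OF that] unfolding I_def J_def by auto
  have QSE: "\<exists>p\<in>set ps. Q = Qf p" if "Q \<in> QS" for Q using that by (auto simp: QS_def)
  have "setting G f s G' f' e0 QS"
  proof
    show "wf_dgraph G" "wf_dgraph G'" "extends G' G" "e0 \<in> arcs G" "is_extraction_order G f s"
      using wf wf' ext e0 eo by auto
    show "\<And>e. e \<in> arcs G \<Longrightarrow> f' e = f e" by (simp add: f'_def)
    show "xpath G' f' (xtail G f e0) Q (xhead G f e0)" if "Q \<in> QS" for Q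
      using QSE[OF that] QP(1) by blast
    show "Q \<noteq> []" if QQ: "Q \<in> QS" for Q
    proof -
      obtain p where p: "p \<in> set ps" "Q = Qf p" using QSE[OF QQ] by blast
      have "length p \<ge> 2" using P1[OF p(1)] by simp
      then have "set p \<noteq> {}" by auto
      then show ?thesis using QP(3)[OF p(1)] p(2) by auto
    qed
    show "set Q \<inter> arcs G = {}" if QQ: "Q \<in> QS" for Q
    proof -
      obtain p where p: "p \<in> set ps" "Q = Qf p" using QSE[OF QQ] by blast
      then show ?thesis using QP(3)[OF p(1)] P1[OF p(1)] by simp
    qed
    show "(set (walk_verts G' f' (xtail G f e0) Q) - {xtail G f e0, xhead G f e0}) \<inter> verts G = {}"
      if QQ: "Q \<in> QS" for Q
    proof -
      obtain p where p: "p \<in> set ps" "Q = Qf p" using QSE[OF QQ] by blast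
      then show ?thesis using QP(2)[OF p(1)] P1[OF p(1)] by simp
    qed
    show "set Q1 \<inter> set Q2 = {} \<and>
        (set (walk_verts G' f' (xtail G f e0) Q1) - {xtail G f e0, xhead G f e0}) \<inter>
        (set (walk_verts G' f' (xtail G f e0) Q2) - {xtail G f e0, xhead G f e0}) = {}"
      if a: "Q1 \<in> QS" "Q2 \<in> QS" "Q1 \<noteq> Q2" for Q1 Q2
    proof -
      obtain p1 where p1: "p1 \<in> set ps" "Q1 = Qf p1" using QSE[OF a(1)] by blast
      obtain p2 where p2: "p2 \<in> set ps" "Q2 = Qf p2" using QSE[OF a(2)] by blast
      have "p1 \<noteq> p2" using a(3) p1 p2 by auto
      then have d: "set p1 \<inter> set p2 = {} \<and> inner_verts G' p1 \<inter> inner_verts G' p2 = {}"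
        using P2'[OF p1(1) p2(1)] by simp
      show ?thesis unfolding p1(2) p2(2) QP(2)[OF p1(1)] QP(2)[OF p2(1)] QP(3)[OF p1(1)] QP(3)[OF p2(1)]
        using d .
    qed
    show "arcs G' - arcs G \<subseteq> (\<Union>Q \<in> QS. set Q)"
    proof
      fix e assume "e \<in> arcs G' - arcs G"
      then obtain p where p: "p \<in> set ps" "e \<in> set p" using P3 by blast
      then have "Qf p \<in> QS" "e \<in> set (Qf p)" using QP(3)[OF p(1)] by (auto simp: QS_def)
      then show "e \<in> (\<Union>Q \<in> QS. set Q)" by blast
    qed
    show "verts G' - verts G \<subseteq> (\<Union>Q \<in> QS. set (walk_verts G' f' (xtail G f e0) Q) - {xtail G f e0, xhead G f e0})"
    proof
      fix v assume "v \<in> verts G' - verts G"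
      then obtain p where p: "p \<in> set ps" "v \<in> inner_verts G' p" using P4 by blast
      then have "Qf p \<in> QS" "v \<in> set (walk_verts G' f' (xtail G f e0) (Qf p)) - {xtail G f e0, xhead G f e0}"
        using QP(2)[OF p(1)] by (auto simp: QS_def)
      then show "v \<in> (\<Union>Q \<in> QS. set (walk_verts G' f' (xtail G f e0) Q) - {xtail G f e0, xhead G f e0})" by blast
    qed
  qed
  then show ?thesis by (rule gen)
qed



theorem lemma34:
  fixes G :: "('v, 'e) dgraph" and e0 :: 'e and i j :: 'v
  assumes "wf_dgraph G"
    and "e0 \<in> arcs G" and "tail G e0 = i" and "head G e0 = j"
    and "\<exists>f s. is_extraction_order G f s"
  shows "(\<forall>G'. add_parallel_edges G i j G' \<longrightarrow> ew G' \<le> ew G + max_degree G) \<and>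
         (\<forall>G'. add_parallel_paths G i j G' \<longrightarrow> ew G' \<le> ew G + max_degree G)"
proof -
  obtain f0 s0 where eo0: "is_extraction_order G f0 s0" using assms(5) by blast
  define S where "S = {(f, s). is_extraction_order G f s}"
  have ne: "(\<lambda>fs. xwidth G (fst fs)) ` S \<noteq> {}" using eo0 by (auto simp: S_def)
  have "ew G \<in> (\<lambda>fs. xwidth G (fst fs)) ` S"
    unfolding ew_def S_def[symmetric] using Inf_nat_def1[OF ne] .
  then obtain f s where fs: "is_extraction_order G f s" "ew G = xwidth G f" by (auto simp: S_def)
  have fin: "finite {e \<in> arcs G. tail G e = i}" using assms(1) by (simp add: wf_dgraph_def)
  have "e0 \<in> {e \<in> arcs G. tail G e = i}" using assms(2,3) by simp
  then have "1 \<le> card {e \<in> arcs G. tail G e = i}" using fin by (metis One_nat_def Suc_leI card_gt_0_iff empty_iff)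
  then have dg: "1 \<le> degree G i" by (simp add: degree_def)
  have iv: "i \<in> verts G" using assms(1-3) by (auto simp: wf_dgraph_def)
  have "degree G i \<le> max_degree G" unfolding max_degree_def
    using iv assms(1) by (intro Max_ge) (auto simp: wf_dgraph_def)
  then have md: "1 \<le> max_degree G" using dg by simp
  show ?thesis
  proof (intro conjI allI impI)
    fix G' assume "add_parallel_edges G i j G'"
    then have "ew G' \<le> xwidth G f + 1" using edges_case[OF assms(1-4) fs(1)] by simp
    then show "ew G' \<le> ew G + max_degree G" using fs(2) md by simp
  next
    fix G' assume "add_parallel_paths G i j G'"
    then have "ew G' \<le> xwidth G f + 1" using paths_case[OF assms(1-4) fs(1)] by simp
    then show "ew G' \<le> ew G + max_degree G" using fs(2) md by simp
  qed
qed


end
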